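(* Let $V$ be a Poisson algebra over $\Bbbk$ with product $ab$ and bracket $[a,b]$, let $D$ be a derivation of $V$ (of both the product and the bracket), and let $V[t,t^{-1}]$ be the commutative algebra of Laurent polynomials over $V$. Then the bilinear map defined by $$[at^n,bt^m]=[a,b]t^{n+m}+\big(naD(b)-mbD(a)\big)t^{n+m-1},\qquad a,b\in V,\ n,m\in\mathbb Z,$$ is a Poisson bracket on $V[t,t^{-1}]$ (together with the usual commutative multiplication of Laurent polynomials).
   Context: $\Bbbk$ is a field of characteristic $0$. A Poisson algebra is a commutative associative algebra with a Lie bracket satisfying $[a,bc]=[a,b]c+b[a,c]$. *)

theory Defs
  imports Main "HOL-Library.Poly_Mapping"
begin

text \<open>A (not necessarily unital) commutative associative algebra over a field:
  the ring structure comes from the type class comm_ring, the scalar action is smul.\<close>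
definition comm_algebra_over :: "('k::field \<Rightarrow> 'a::comm_ring \<Rightarrow> 'a) \<Rightarrow> bool" where
  "comm_algebra_over smul \<longleftrightarrow>
     (\<forall>c d x. smul (c + d) x = smul c x + smul d x) \<and>
     (\<forall>c x y. smul c (x + y) = smul c x + smul c y) \<and>
     (\<forall>c d x. smul (c * d) x = smul c (smul d x)) \<and>
     (\<forall>x. smul 1 x = x) \<and>
     (\<forall>c x y. smul c (x * y) = smul c x * y)"

definition k_bilinear :: "('k::field \<Rightarrow> 'a::comm_ring \<Rightarrow> 'a) \<Rightarrow> ('a \<Rightarrow> 'a \<Rightarrow> 'a) \<Rightarrow> bool" where
  "k_bilinear smul br \<longleftrightarrow>
     (\<forall>x y z. br (x + y) z = br x z + br y z) \<and>
     (\<forall>x y z. br x (y + z) = br x y + br x z) \<and>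
     (\<forall>c x y. br (smul c x) y = smul c (br x y)) \<and>
     (\<forall>c x y. br x (smul c y) = smul c (br x y))"

definition poisson_bracket :: "('k::field \<Rightarrow> 'a::comm_ring \<Rightarrow> 'a) \<Rightarrow> ('a \<Rightarrow> 'a \<Rightarrow> 'a) \<Rightarrow> bool" where
  "poisson_bracket smul br \<longleftrightarrow>
     k_bilinear smul br \<and>
     (\<forall>x. br x x = 0) \<and>
     (\<forall>x y z. br x (br y z) + br y (br z x) + br z (br x y) = 0) \<and>
     (\<forall>x y z. br x (y * z) = br x y * z + y * br x z)"

definition poisson_algebra :: "('k::field \<Rightarrow> 'a::comm_ring \<Rightarrow> 'a) \<Rightarrow> ('a \<Rightarrow> 'a \<Rightarrow> 'a) \<Rightarrow> bool" where
  "poisson_algebra smul br \<longleftrightarrow> comm_algebra_over smul \<and> poisson_bracket smul br"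

definition poisson_derivation ::
  "('k::field \<Rightarrow> 'a::comm_ring \<Rightarrow> 'a) \<Rightarrow> ('a \<Rightarrow> 'a \<Rightarrow> 'a) \<Rightarrow> ('a \<Rightarrow> 'a) \<Rightarrow> bool" where
  "poisson_derivation smul br D \<longleftrightarrow>
     (\<forall>x y. D (x + y) = D x + D y) \<and>
     (\<forall>c x. D (smul c x) = smul c (D x)) \<and>
     (\<forall>x y. D (x * y) = D x * y + x * D y) \<and>
     (\<forall>x y. D (br x y) = br (D x) y + br x (D y))"

text \<open>Laurent polynomials V[t,t^-1] are finitely supported maps int to V; the coefficient
  at n is the coefficient of t^n. Their product (the poly_mapping convolution) is the usual
  product of Laurent polynomials.\<close>
definition laurent_smul :: "('k \<Rightarrow> 'v::comm_ring \<Rightarrow> 'v) \<Rightarrow> 'k \<Rightarrow> (int \<Rightarrow>\<^sub>0 'v) \<Rightarrow> (int \<Rightarrow>\<^sub>0 'v)" where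
  "laurent_smul smul c p = Poly_Mapping.map (smul c) p"

definition laurent_bracket ::
  "('k::field \<Rightarrow> 'v::comm_ring \<Rightarrow> 'v) \<Rightarrow> ('v \<Rightarrow> 'v \<Rightarrow> 'v) \<Rightarrow> ('v \<Rightarrow> 'v)
     \<Rightarrow> (int \<Rightarrow>\<^sub>0 'v) \<Rightarrow> (int \<Rightarrow>\<^sub>0 'v) \<Rightarrow> (int \<Rightarrow>\<^sub>0 'v)" where
  "laurent_bracket smul br D p q =
     (\<Sum>n\<in>Poly_Mapping.keys p. \<Sum>m\<in>Poly_Mapping.keys q.
        Poly_Mapping.single (n + m) (br (Poly_Mapping.lookup p n) (Poly_Mapping.lookup q m)) +
        Poly_Mapping.single (n + m - 1)
          (smul (of_int n) (Poly_Mapping.lookup p n * D (Poly_Mapping.lookup q m)) -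
           smul (of_int m) (Poly_Mapping.lookup q m * D (Poly_Mapping.lookup p n))))"

end

theory Submission
  imports Defs
begin


definition addf :: "('a::ab_group_add \<Rightarrow> 'b::ab_group_add) \<Rightarrow> bool" where
  "addf F \<longleftrightarrow> (\<forall>x y. F (x + y) = F x + F y)"

lemma addfD: "addf F \<Longrightarrow> F (x + y) = F x + F y" by (simp add: addf_def)
lemma addf_0: "addf F \<Longrightarrow> F 0 = 0"
  using addfD[of F 0 0] by simp
lemma addf_uminus: "addf F \<Longrightarrow> F (- x) = - F x"
  using addfD[of F x "-x"] addf_0[of F] by (simp add: add_eq_0_iff)
lemma addf_diff: "addf F \<Longrightarrow> F (x - y) = F x - F y"
  using addfD[of F x "-y"] addf_uminus[of F y] by simp
lemma addf_sum: "addf F \<Longrightarrow> F (sum g S) = (\<Sum>x\<in>S. F (g x))"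
  by (induction S rule: infinite_finite_induct) (auto simp: addf_0 addfD)

lemma addf_add[intro]: "addf F \<Longrightarrow> addf G \<Longrightarrow> addf (\<lambda>x. F x + G x)"
  by (simp add: addf_def algebra_simps)
lemma addf_sub[intro]: "addf F \<Longrightarrow> addf G \<Longrightarrow> addf (\<lambda>x. F x - G x)"
  by (simp add: addf_def algebra_simps)
lemma addf_comp: "addf F \<Longrightarrow> addf G \<Longrightarrow> addf (\<lambda>x. F (G x))"
  by (simp add: addf_def)
lemma addf_multR[intro]: "addf F \<Longrightarrow> addf (\<lambda>x. F x * (c::'b::ring))"
  by (simp add: addf_def algebra_simps)
lemma addf_multL[intro]: "addf F \<Longrightarrow> addf (\<lambda>x. (c::'b::ring) * F x)"
  by (simp add: addf_def algebra_simps)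
lemma addf_id[intro]: "addf (\<lambda>x. x)" by (simp add: addf_def)

lemma pm_expand: "(p :: 'i \<Rightarrow>\<^sub>0 'v::comm_monoid_add) = (\<Sum>n\<in>Poly_Mapping.keys p. Poly_Mapping.single n (Poly_Mapping.lookup p n))"
proof (rule poly_mapping_eqI)
  fix k
  have "Poly_Mapping.lookup (\<Sum>n\<in>Poly_Mapping.keys p. Poly_Mapping.single n (Poly_Mapping.lookup p n)) k = (\<Sum>n\<in>Poly_Mapping.keys p. Poly_Mapping.lookup (Poly_Mapping.single n (Poly_Mapping.lookup p n)) k)"
    by (simp add: lookup_sum)
  also have "\<dots> = (\<Sum>n\<in>Poly_Mapping.keys p. if n = k then Poly_Mapping.lookup p n else 0)"
    by (intro sum.cong) (auto simp: lookup_single when_def)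
  also have "\<dots> = Poly_Mapping.lookup p k"
    by (simp add: in_keys_iff)
  finally show "Poly_Mapping.lookup p k = Poly_Mapping.lookup (\<Sum>n\<in>Poly_Mapping.keys p. Poly_Mapping.single n (Poly_Mapping.lookup p n)) k" by simp
qed

lemma addf_zero:
  fixes F :: "('i \<Rightarrow>\<^sub>0 'v::ab_group_add) \<Rightarrow> 'b::ab_group_add"
  assumes "addf F" "\<And>n a. F (Poly_Mapping.single n a) = 0"
  shows "F p = 0"
proof -
  have "F p = F (\<Sum>n\<in>Poly_Mapping.keys p. Poly_Mapping.single n (Poly_Mapping.lookup p n))" by (subst pm_expand) simp
  also have "\<dots> = 0" by (simp add: addf_sum[OF assms(1)] assms(2))
  finally show ?thesis .
qed

lemma addf_eq:
  fixes F G :: "('i \<Rightarrow>\<^sub>0 'v::ab_group_add) \<Rightarrow> 'b::ab_group_add"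
  assumes "addf F" "addf G" "\<And>n a. F (Poly_Mapping.single n a) = G (Poly_Mapping.single n a)"
  shows "F p = G p"
  using addf_zero[of "\<lambda>p. F p - G p" p] assms by (auto simp: addf_sub)

definition ext1 :: "('i \<Rightarrow> 'v::zero \<Rightarrow> 'w::comm_monoid_add) \<Rightarrow> ('i \<Rightarrow>\<^sub>0 'v) \<Rightarrow> 'w" where
  "ext1 g p = (\<Sum>n\<in>Poly_Mapping.keys p. g n (Poly_Mapping.lookup p n))"

lemma ext1_superset:
  assumes "finite S" "Poly_Mapping.keys p \<subseteq> S" "\<And>n. g n 0 = 0"
  shows "ext1 g p = (\<Sum>n\<in>S. g n (Poly_Mapping.lookup p n))"
  unfolding ext1_def
  by (rule sum.mono_neutral_left) (use assms in \<open>auto simp: in_keys_iff\<close>)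

lemma ext1_addf:
  assumes "\<And>n. addf (g n)"
  shows "addf (ext1 g)"
  unfolding addf_def
proof (intro allI)
  fix p q :: "'a \<Rightarrow>\<^sub>0 'b"
  let ?S = "Poly_Mapping.keys p \<union> Poly_Mapping.keys q"
  have g0: "g n 0 = 0" for n using addf_0[OF assms] .
  have "ext1 g (p + q) = (\<Sum>n\<in>?S. g n (Poly_Mapping.lookup (p+q) n))"
    by (rule ext1_superset) (use keys_add[of p q] g0 in auto)
  also have "\<dots> = (\<Sum>n\<in>?S. g n (Poly_Mapping.lookup p n)) + (\<Sum>n\<in>?S. g n (Poly_Mapping.lookup q n))"
    by (simp add: lookup_add addfD[OF assms] sum.distrib)
  also have "\<dots> = ext1 g p + ext1 g q"
    by (subst (1 2) ext1_superset[where S="?S"]) (use g0 in auto)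
  finally show "ext1 g (p + q) = ext1 g p + ext1 g q" .
qed

lemma ext1_single:
  assumes "\<And>n. g n 0 = 0"
  shows "ext1 g (Poly_Mapping.single n a) = g n a"
  unfolding ext1_def using assms by auto

lemma ext1_fun_add: "ext1 (\<lambda>n a. g n a + h n a) p = ext1 g p + ext1 h p"
  unfolding ext1_def by (simp add: sum.distrib)

lemma lookup_map0: "f 0 = 0 \<Longrightarrow> Poly_Mapping.lookup (Poly_Mapping.map f p) k = f (Poly_Mapping.lookup p k)"
  by (simp add: map.rep_eq when_def)

lemma addf_map: "addf f \<Longrightarrow> addf (Poly_Mapping.map f)"
  unfolding addf_def by (auto intro!: poly_mapping_eqI simp: lookup_map0 addf_0[unfolded addf_def] lookup_add)

lemma addf_neg[intro]: "addf F \<Longrightarrow> addf (\<lambda>x. - F x)"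
  by (simp add: addf_def algebra_simps)

lemma bil_eq:
  fixes F G :: "('i \<Rightarrow>\<^sub>0 'v::ab_group_add) \<Rightarrow> ('j \<Rightarrow>\<^sub>0 'w::ab_group_add) \<Rightarrow> 'b::ab_group_add"
  assumes "\<And>y. addf (\<lambda>x. F x y)" "\<And>x. addf (\<lambda>y. F x y)"
    "\<And>y. addf (\<lambda>x. G x y)" "\<And>x. addf (\<lambda>y. G x y)"
    "\<And>n a m b. F (Poly_Mapping.single n a) (Poly_Mapping.single m b) = G (Poly_Mapping.single n a) (Poly_Mapping.single m b)"
  shows "F x y = G x y"
proof -
  have "F (Poly_Mapping.single n a) y = G (Poly_Mapping.single n a) y" for n a
    by (rule addf_eq[where F="\<lambda>y. F (Poly_Mapping.single n a) y" and G="\<lambda>y. G (Poly_Mapping.single n a) y"]) (use assms in auto)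
  note h = this
  show ?thesis
    by (rule addf_eq[where F="\<lambda>x. F x y" and G="\<lambda>x. G x y"]) (use assms h in auto)
qed

lemma tri_eq:
  fixes F G :: "('i \<Rightarrow>\<^sub>0 'v::ab_group_add) \<Rightarrow> ('j \<Rightarrow>\<^sub>0 'w::ab_group_add) \<Rightarrow> ('l \<Rightarrow>\<^sub>0 'u::ab_group_add) \<Rightarrow> 'b::ab_group_add"
  assumes "\<And>y z. addf (\<lambda>x. F x y z)" "\<And>x z. addf (\<lambda>y. F x y z)" "\<And>x y. addf (\<lambda>z. F x y z)"
    "\<And>y z. addf (\<lambda>x. G x y z)" "\<And>x z. addf (\<lambda>y. G x y z)" "\<And>x y. addf (\<lambda>z. G x y z)"
    "\<And>n a m b k c. F (Poly_Mapping.single n a) (Poly_Mapping.single m b) (Poly_Mapping.single k c)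
        = G (Poly_Mapping.single n a) (Poly_Mapping.single m b) (Poly_Mapping.single k c)"
  shows "F x y z = G x y z"
proof -
  have "F (Poly_Mapping.single n a) y z = G (Poly_Mapping.single n a) y z" for n a
    by (rule bil_eq[where F="\<lambda>y z. F (Poly_Mapping.single n a) y z" and G="\<lambda>y z. G (Poly_Mapping.single n a) y z"]) (use assms in auto)
  note h = this
  show ?thesis
    by (rule addf_eq[where F="\<lambda>x. F x y z" and G="\<lambda>x. G x y z"]) (use assms h in auto)
qed

lemma addf_zf[intro]: "addf (\<lambda>x. 0)" by (simp add: addf_def)
lemma addf_single[intro]: "addf f \<Longrightarrow> addf (\<lambda>a. Poly_Mapping.single k (f a))"
  by (simp add: addf_def single_add)

lemma ext2_props:
  fixes H :: "'i \<Rightarrow> 'j \<Rightarrow> 'v::ab_group_add \<Rightarrow> 'w::ab_group_add \<Rightarrow> 'u::ab_group_add"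
  assumes H1: "\<And>n m b. addf (\<lambda>a. H n m a b)" and H2: "\<And>n m a. addf (H n m a)"
  shows "addf (\<lambda>p. ext1 (\<lambda>n a. ext1 (\<lambda>m b. H n m a b) q) p)"
    and "addf (\<lambda>q. ext1 (\<lambda>n a. ext1 (\<lambda>m b. H n m a b) q) p)"
    and "ext1 (\<lambda>n a. ext1 (\<lambda>m b. H n m a b) (Poly_Mapping.single m' b')) (Poly_Mapping.single n' a') = H n' m' a' b'"
proof -
  have e: "(\<lambda>m. H n m (x+y)) = (\<lambda>m b. H n m x b + H n m y b)" for n x y
    by (intro ext) (simp add: addfD[OF H1])
  show "addf (\<lambda>p. ext1 (\<lambda>n a. ext1 (\<lambda>m b. H n m a b) q) p)"
    by (rule ext1_addf) (simp only: addf_def e ext1_fun_add, simp)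
  have h: "addf (ext1 (\<lambda>m b. H n m a b))" for n a
    by (rule ext1_addf) (rule H2)
  show "addf (\<lambda>q. ext1 (\<lambda>n a. ext1 (\<lambda>m b. H n m a b) q) p)"
    unfolding addf_def by (simp only: addfD[OF h] ext1_fun_add) simp
  have z1: "H n m 0 b = 0" for n m b using addf_0[OF H1] .
  have z2: "H n m a 0 = 0" for n m a using addf_0[OF H2] .
  have z3: "ext1 (\<lambda>m b. H n m 0 b) q = 0" for n q unfolding ext1_def by (simp add: z1)
  show "ext1 (\<lambda>n a. ext1 (\<lambda>m b. H n m a b) (Poly_Mapping.single m' b')) (Poly_Mapping.single n' a') = H n' m' a' b'"
    by (simp add: ext1_single z2 z3, rule ext1_single, simp add: z1)
qed

lemma abstract_poisson:
  fixes B :: "'a::comm_ring \<Rightarrow> 'a \<Rightarrow> 'a" and P Q :: "'a \<Rightarrow> 'a"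
  assumes B1: "\<And>x y z. B (x+y) z = B x z + B y z"
    and B2: "\<And>x y z. B x (y+z) = B x y + B x z"
    and Balt: "\<And>x. B x x = 0"
    and Bjac: "\<And>x y z. B x (B y z) + B y (B z x) + B z (B x y) = 0"
    and Bleib: "\<And>x y z. B x (y*z) = B x y * z + y * B x z"
    and P1: "\<And>x y. P (x+y) = P x + P y" and Pm: "\<And>x y. P (x*y) = P x * y + x * P y"
    and PB: "\<And>x y. P (B x y) = B (P x) y + B x (P y)"
    and Q1: "\<And>x y. Q (x+y) = Q x + Q y" and Qm: "\<And>x y. Q (x*y) = Q x * y + x * Q y"
    and QB: "\<And>x y. Q (B x y) = B (Q x) y + B x (Q y)"
    and PQ: "\<And>x. P (Q x) = Q (P x)"
  defines "E \<equiv> \<lambda>x y. B x y + P x * Q y - P y * Q x"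
  shows "E x (E y z) + E y (E z x) + E z (E x y) = 0"
    and "E x (y * z) = E x y * z + y * E x z"
    and "E x x = 0"
    and "E (x+y) z = E x z + E y z"
    and "E x (y+z) = E x y + E x z"
proof -
  have Bn: "B u v = - B v u" for u v
  proof -
    have "B (u+v) (u+v) = B u u + B v u + (B u v + B v v)" by (simp only: B1 B2)
    then have "B u v + B v u = 0" by (simp add: Balt add.commute)
    then show ?thesis by (metis eq_neg_iff_add_eq_0)
  qed
  have B1m: "B (-x) z = - B x z" for x z using B1[of x "-x" z] B1[of 0 0 z] by (simp add: add_eq_0_iff)
  have B2m: "B x (-z) = - B x z" for x z using B2[of x z "-z"] B2[of x 0 0] by (simp add: add_eq_0_iff)
  have B1d: "B (x-y) z = B x z - B y z" for x y z using B1[of x "-y" z] B1m by simp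
  have B2d: "B x (y-z) = B x y - B x z" for x y z using B2[of x y "-z"] B2m by simp
  have Pm1: "P (-x) = - P x" for x using P1[of x "-x"] P1[of 0 0] by (simp add: add_eq_0_iff)
  have Qm1: "Q (-x) = - Q x" for x using Q1[of x "-x"] Q1[of 0 0] by (simp add: add_eq_0_iff)
  have Pd: "P (x-y) = P x - P y" for x y using P1[of x "-y"] Pm1 by simp
  have Qd: "Q (x-y) = Q x - Q y" for x y using Q1[of x "-y"] Qm1 by simp
  show "E x (E y z) + E y (E z x) + E z (E x y) = 0"
    unfolding E_def
    apply (simp only: B2 B2d P1 Pd Q1 Qd Pm Qm PB QB Bleib PQ)
    using Bjac[of x y z]
    apply (simp add: Bn[of "P x" y] Bn[of "P x" z] Bn[of "P y" x] Bn[of "P y" z] Bn[of "P z" x] Bn[of "P z" y]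
       Bn[of "Q x" y] Bn[of "Q x" z] Bn[of "Q y" x] Bn[of "Q y" z] Bn[of "Q z" x] Bn[of "Q z" y] algebra_simps)
    done
  show "E x (y * z) = E x y * z + y * E x z"
    unfolding E_def by (simp add: Bleib Pm Qm algebra_simps)
  show "E x x = 0" unfolding E_def by (simp add: Balt)
  show "E (x+y) z = E x z + E y z" unfolding E_def by (simp add: B1 P1 Q1 algebra_simps)
  show "E x (y+z) = E x y + E x z" unfolding E_def by (simp add: B2 P1 Q1 algebra_simps)
qed

lemma abstract_smul:
  fixes B :: "'a::comm_ring \<Rightarrow> 'a \<Rightarrow> 'a" and P Q S :: "'a \<Rightarrow> 'a"
  assumes S1: "\<And>x y. S (x+y) = S x + S y"
    and SB1: "\<And>x y. S (B x y) = B (S x) y" and SB2: "\<And>x y. S (B x y) = B x (S y)"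
    and Sm: "\<And>x y. S (x*y) = S x * y"
    and PS: "\<And>x. P (S x) = S (P x)" and QS: "\<And>x. Q (S x) = S (Q x)"
  defines "E \<equiv> \<lambda>x y. B x y + P x * Q y - P y * Q x"
  shows "E (S x) y = S (E x y)" and "E x (S y) = S (E x y)"
proof -
  have Sm1: "S (-x) = - S x" for x using S1[of x "-x"] S1[of 0 0] by (simp add: add_eq_0_iff)
  have Sd: "S (x-y) = S x - S y" for x y using S1[of x "-y"] Sm1 by simp
  have SmR: "S (x*y) = x * S y" for x y using Sm[of y x] by (simp add: mult.commute)
  show "E (S x) y = S (E x y)"
    unfolding E_def by (simp add: S1[symmetric] Sd[symmetric] PS QS SB1[symmetric] Sm[symmetric] SmR[symmetric])
  show "E x (S y) = S (E x y)"
    unfolding E_def by (simp add: S1[symmetric] Sd[symmetric] PS QS SB2[symmetric] Sm[symmetric] SmR[symmetric])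
qed


locale pctx =
  fixes smul :: "'k::field_char_0 \<Rightarrow> 'v::comm_ring \<Rightarrow> 'v"
    and br :: "'v \<Rightarrow> 'v \<Rightarrow> 'v"
    and D :: "'v \<Rightarrow> 'v"
  assumes PA: "poisson_algebra smul br" and PD: "poisson_derivation smul br D"
begin

lemma sadd: "smul (c + d) x = smul c x + smul d x"
  and sadd2: "smul c (x + y) = smul c x + smul c y"
  and smult: "smul (c * d) x = smul c (smul d x)"
  and s1: "smul 1 x = x"
  and smm: "smul c (x * y) = smul c x * y"
  using PA unfolding poisson_algebra_def comm_algebra_over_def by auto

lemma badd1: "br (x + y) z = br x z + br y z"
  and badd2: "br x (y + z) = br x y + br x z"
  and bs1: "br (smul c x) y = smul c (br x y)"
  and bs2: "br x (smul c y) = smul c (br x y)"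
  and balt: "br x x = 0"
  and bjac: "br x (br y z) + br y (br z x) + br z (br x y) = 0"
  and bleib: "br x (y * z) = br x y * z + y * br x z"
  using PA unfolding poisson_algebra_def poisson_bracket_def k_bilinear_def by auto

lemma dadd: "D (x + y) = D x + D y"
  and ds: "D (smul c x) = smul c (D x)"
  and dm: "D (x * y) = D x * y + x * D y"
  and db: "D (br x y) = br (D x) y + br x (D y)"
  using PD unfolding poisson_derivation_def by auto

lemma addf_smul: "addf (smul c)" by (simp add: addf_def sadd2)
lemma addf_br1: "addf (\<lambda>x. br x y)" by (simp add: addf_def badd1)
lemma addf_br2: "addf (br x)" by (simp add: addf_def badd2)
lemma addf_D: "addf D" by (simp add: addf_def dadd)

lemma s0[simp]: "smul c 0 = 0" using addf_0[OF addf_smul] .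
lemma br0[simp]: "br 0 y = 0" using addf_0[OF addf_br1] .
lemma br0'[simp]: "br x 0 = 0" using addf_0[OF addf_br2] .
lemma D0[simp]: "D 0 = 0" using addf_0[OF addf_D] .
lemma smmR: "smul c (x * y) = x * smul c y" by (metis smm mult.commute)

definition S :: "'k \<Rightarrow> (int \<Rightarrow>\<^sub>0 'v) \<Rightarrow> (int \<Rightarrow>\<^sub>0 'v)" where "S c p = laurent_smul smul c p"
definition B0 :: "(int \<Rightarrow>\<^sub>0 'v) \<Rightarrow> (int \<Rightarrow>\<^sub>0 'v) \<Rightarrow> (int \<Rightarrow>\<^sub>0 'v)" where "B0 p q = ext1 (\<lambda>n a. ext1 (\<lambda>m b. Poly_Mapping.single (n+m) (br a b)) q) p"
definition Dt :: "(int \<Rightarrow>\<^sub>0 'v) \<Rightarrow> (int \<Rightarrow>\<^sub>0 'v)" where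
  "Dt p = ext1 (\<lambda>n a. Poly_Mapping.single (n-1) (smul (of_int n) a)) p"
definition Dh :: "(int \<Rightarrow>\<^sub>0 'v) \<Rightarrow> (int \<Rightarrow>\<^sub>0 'v)" where "Dh p = Poly_Mapping.map D p"

lemma addf_S: "addf (S c)"
  unfolding S_def[abs_def] laurent_smul_def by (rule addf_map[OF addf_smul])
lemma S_single: "S c (Poly_Mapping.single n a) = Poly_Mapping.single n (smul c a)"
  unfolding S_def laurent_smul_def by simp
lemma addf_Dh: "addf Dh"
  unfolding Dh_def[abs_def] by (rule addf_map[OF addf_D])
lemma Dh_single: "Dh (Poly_Mapping.single n a) = Poly_Mapping.single n (D a)"
  unfolding Dh_def by simp
lemma addf_Dt: "addf Dt"
  unfolding Dt_def[abs_def] by (rule ext1_addf) (simp add: addf_def sadd2 single_add)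
lemma Dt_single: "Dt (Poly_Mapping.single n a) = Poly_Mapping.single (n-1) (smul (of_int n) a)"
  unfolding Dt_def by (rule ext1_single) simp

lemma inner0: "ext1 (\<lambda>m b. Poly_Mapping.single (n+m) (br 0 b)) q = 0"
  unfolding ext1_def by simp

lemma addf_B0_1: "addf (\<lambda>p. B0 p q)"
  unfolding B0_def
  by (rule ext1_addf) (simp add: addf_def badd1 single_add ext1_fun_add)

lemma addf_B0_2: "addf (B0 p)"
  unfolding addf_def
proof (intro allI)
  fix q r
  have "addf (ext1 (\<lambda>m b. Poly_Mapping.single (n+m) (br a b)))" for n a
    by (rule ext1_addf) (simp add: addf_def badd2 single_add)
  note h = addfD[OF this]
  show "B0 p (q + r) = B0 p q + B0 p r"
    unfolding B0_def by (simp only: h ext1_fun_add)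
qed

lemma B0_single: "B0 (Poly_Mapping.single n a) (Poly_Mapping.single m b) = Poly_Mapping.single (n+m) (br a b)"
  unfolding B0_def
  by (subst ext1_single) (simp_all add: inner0 ext1_single)


lemma addf_B0c1[intro]: "addf F \<Longrightarrow> addf (\<lambda>x. B0 (F x) y)"
  using addf_comp[OF addf_B0_1] .
lemma addf_B0c2[intro]: "addf F \<Longrightarrow> addf (\<lambda>x. B0 y (F x))"
  using addf_comp[OF addf_B0_2] .
lemma addf_Sc[intro]: "addf F \<Longrightarrow> addf (\<lambda>x. S c (F x))"
  using addf_comp[OF addf_S] .
lemma addf_Dtc[intro]: "addf F \<Longrightarrow> addf (\<lambda>x. Dt (F x))"
  using addf_comp[OF addf_Dt] .
lemma addf_Dhc[intro]: "addf F \<Longrightarrow> addf (\<lambda>x. Dh (F x))"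
  using addf_comp[OF addf_Dh] .

lemmas af = addf_zf addf_add addf_sub addf_neg addf_multR addf_multL addf_B0c1 addf_B0c2 addf_Dtc addf_Dhc addf_Sc addf_id

lemmas sing = B0_single Dt_single Dh_single S_single mult_single

lemma B0_jac: "B0 x (B0 y z) + B0 y (B0 z x) + B0 z (B0 x y) = 0"
proof (rule tri_eq[where F="\<lambda>x y z. B0 x (B0 y z) + B0 y (B0 z x) + B0 z (B0 x y)" and G="\<lambda>x y z. 0", simplified])
  fix n m k :: int and a b c
  have e: "m + (k + n) = n + (m + k)" "k + (n + m) = n + (m + k)" by simp_all
  show "B0 (Poly_Mapping.single n a) (B0 (Poly_Mapping.single m b) (Poly_Mapping.single k c)) +
    B0 (Poly_Mapping.single m b) (B0 (Poly_Mapping.single k c) (Poly_Mapping.single n a)) +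
    B0 (Poly_Mapping.single k c) (B0 (Poly_Mapping.single n a) (Poly_Mapping.single m b)) = 0"
    by (simp only: B0_single e single_add[symmetric] bjac single_zero)
qed (intro af)+

lemma B0_leib: "B0 x (y * z) = B0 x y * z + y * B0 x z"
proof (rule tri_eq[where F="\<lambda>x y z. B0 x (y * z)" and G="\<lambda>x y z. B0 x y * z + y * B0 x z", simplified])
  fix n m k :: int and a b c
  have e: "m + (n + k) = n + (m + k)" "n + m + k = n + (m + k)" by simp_all
  show "B0 (Poly_Mapping.single n a) (Poly_Mapping.single m b * Poly_Mapping.single k c) =
    B0 (Poly_Mapping.single n a) (Poly_Mapping.single m b) * Poly_Mapping.single k c +
    Poly_Mapping.single m b * B0 (Poly_Mapping.single n a) (Poly_Mapping.single k c)"
    by (simp only: sing e single_add[symmetric] bleib)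
qed (intro af)+

lemma B0_anti: "B0 x y = - B0 y x"
proof (rule bil_eq[where F="\<lambda>x y. B0 x y" and G="\<lambda>x y. - B0 y x", simplified])
  fix n m :: int and a b
  have e: "m + n = n + m" by simp
  have "br a b = - br b a"
  proof -
    have "br (a+b) (a+b) = br a a + br b a + (br a b + br b b)" by (simp only: badd1 badd2)
    then have "br a b + br b a = 0" by (simp add: balt add.commute)
    then show ?thesis by (simp add: add_eq_0_iff)
  qed
  then show "B0 (Poly_Mapping.single n a) (Poly_Mapping.single m b) = - B0 (Poly_Mapping.single m b) (Poly_Mapping.single n a)"
    by (simp add: B0_single e single_uminus)
qed (auto intro: addf_B0_1 addf_B0_2)

lemma B0_alt: "B0 x x = 0"
proof (rule poly_mapping_eqI)
  fix k
  let ?v = "Poly_Mapping.lookup (B0 x x) k"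
  have "?v + ?v = 0"
    using B0_anti[of x x] by (metis add_eq_0_iff lookup_uminus)
  have "?v = smul (1/2) ?v + smul (1/2) ?v" using s1[of ?v] sadd[of "1/2" "1/2" ?v] by simp
  also have "\<dots> = smul (1/2) (?v + ?v)" by (simp add: sadd2)
  also have "\<dots> = 0" using \<open>?v + ?v = 0\<close> by simp
  finally show "?v = Poly_Mapping.lookup 0 k" by simp
qed

lemma Dt_mult: "Dt (x * y) = Dt x * y + x * Dt y"
proof (rule bil_eq[where F="\<lambda>x y. Dt (x * y)" and G="\<lambda>x y. Dt x * y + x * Dt y", simplified])
  fix n m :: int and a b
  have e: "n - 1 + m = n + m - 1" "n + (m - 1) = n + m - 1" by simp_all
  show "Dt (Poly_Mapping.single n a * Poly_Mapping.single m b) =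
    Dt (Poly_Mapping.single n a) * Poly_Mapping.single m b + Poly_Mapping.single n a * Dt (Poly_Mapping.single m b)"
    by (simp only: sing e single_add[symmetric]) (simp add: sadd smm[symmetric] smmR[symmetric])
qed (intro af)+


lemma Dt_B0: "Dt (B0 x y) = B0 (Dt x) y + B0 x (Dt y)"
proof (rule bil_eq[where F="\<lambda>x y. Dt (B0 x y)" and G="\<lambda>x y. B0 (Dt x) y + B0 x (Dt y)", simplified])
  fix n m :: int and a b
  have e: "n - 1 + m = n + m - 1" "n + (m - 1) = n + m - 1" by simp_all
  show "Dt (B0 (Poly_Mapping.single n a) (Poly_Mapping.single m b)) =
    B0 (Dt (Poly_Mapping.single n a)) (Poly_Mapping.single m b) + B0 (Poly_Mapping.single n a) (Dt (Poly_Mapping.single m b))"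
    by (simp only: sing e single_add[symmetric]) (simp add: sadd bs1 bs2)
qed (intro af)+

lemma Dh_mult: "Dh (x * y) = Dh x * y + x * Dh y"
proof (rule bil_eq[where F="\<lambda>x y. Dh (x * y)" and G="\<lambda>x y. Dh x * y + x * Dh y", simplified])
  fix n m :: int and a b
  show "Dh (Poly_Mapping.single n a * Poly_Mapping.single m b) =
    Dh (Poly_Mapping.single n a) * Poly_Mapping.single m b + Poly_Mapping.single n a * Dh (Poly_Mapping.single m b)"
    by (simp only: sing single_add[symmetric] dm)
qed (intro af)+

lemma Dh_B0: "Dh (B0 x y) = B0 (Dh x) y + B0 x (Dh y)"
proof (rule bil_eq[where F="\<lambda>x y. Dh (B0 x y)" and G="\<lambda>x y. B0 (Dh x) y + B0 x (Dh y)", simplified])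
  fix n m :: int and a b
  show "Dh (B0 (Poly_Mapping.single n a) (Poly_Mapping.single m b)) =
    B0 (Dh (Poly_Mapping.single n a)) (Poly_Mapping.single m b) + B0 (Poly_Mapping.single n a) (Dh (Poly_Mapping.single m b))"
    by (simp only: sing single_add[symmetric] db)
qed (intro af)+

lemma Dt_Dh: "Dt (Dh x) = Dh (Dt x)"
  by (rule addf_eq[where F="\<lambda>x. Dt (Dh x)" and G="\<lambda>x. Dh (Dt x)"]) (intro af, intro af, simp add: sing ds)

lemma S_B0_1: "S c (B0 x y) = B0 (S c x) y"
  by (rule bil_eq[where F="\<lambda>x y. S c (B0 x y)" and G="\<lambda>x y. B0 (S c x) y"]) ((intro af)+, simp add: sing bs1)
lemma S_B0_2: "S c (B0 x y) = B0 x (S c y)"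
  by (rule bil_eq[where F="\<lambda>x y. S c (B0 x y)" and G="\<lambda>x y. B0 x (S c y)"]) ((intro af)+, simp add: sing bs2)
lemma S_mult: "S c (x * y) = S c x * y"
  by (rule bil_eq[where F="\<lambda>x y. S c (x * y)" and G="\<lambda>x y. S c x * y"]) ((intro af)+, simp add: sing smm)
lemma Dt_S: "Dt (S c x) = S c (Dt x)"
  by (rule addf_eq[where F="\<lambda>x. Dt (S c x)" and G="\<lambda>x. S c (Dt x)"]) (intro af, intro af, simp add: sing smult[symmetric] mult.commute)
lemma Dh_S: "Dh (S c x) = S c (Dh x)"
  by (rule addf_eq[where F="\<lambda>x. Dh (S c x)" and G="\<lambda>x. S c (Dh x)"]) (intro af, intro af, simp add: sing ds)

lemma addf_smulc[intro]: "addf f \<Longrightarrow> addf (\<lambda>a. smul c (f a))"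
  using addf_comp[OF addf_smul] .
lemma addf_brc1[intro]: "addf f \<Longrightarrow> addf (\<lambda>a. br (f a) b)"
  using addf_comp[OF addf_br1] .
lemma addf_brc2[intro]: "addf f \<Longrightarrow> addf (\<lambda>a. br b (f a))"
  using addf_comp[OF addf_br2] .
lemma addf_Dc[intro]: "addf f \<Longrightarrow> addf (\<lambda>a. D (f a))"
  using addf_comp[OF addf_D] .

lemmas af2 = addf_zf addf_add addf_sub addf_neg addf_multR addf_multL addf_single addf_smulc addf_brc1 addf_brc2 addf_Dc addf_id

definition H :: "int \<Rightarrow> int \<Rightarrow> 'v \<Rightarrow> 'v \<Rightarrow> (int \<Rightarrow>\<^sub>0 'v)" where
  "H n m a b = Poly_Mapping.single (n + m) (br a b) +
        Poly_Mapping.single (n + m - 1) (smul (of_int n) (a * D b) - smul (of_int m) (b * D a))"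

lemma H1: "addf (\<lambda>a. H n m a b)" unfolding H_def by (intro af2)
lemma H2: "addf (H n m a)" unfolding H_def[abs_def] by (intro af2)

lemma lb_ext: "laurent_bracket smul br D p q = ext1 (\<lambda>n a. ext1 (\<lambda>m b. H n m a b) q) p"
  unfolding laurent_bracket_def ext1_def H_def ..

lemma lb_eq: "laurent_bracket smul br D x y = B0 x y + Dt x * Dh y - Dt y * Dh x"
proof (rule bil_eq[where F="\<lambda>x y. laurent_bracket smul br D x y" and G="\<lambda>x y. B0 x y + Dt x * Dh y - Dt y * Dh x", simplified])
  fix n m :: int and a b
  have e: "n - 1 + m = n + m - 1" "m - 1 + n = n + m - 1" by simp_all
  show "laurent_bracket smul br D (Poly_Mapping.single n a) (Poly_Mapping.single m b) =
    B0 (Poly_Mapping.single n a) (Poly_Mapping.single m b) + Dt (Poly_Mapping.single n a) * Dh (Poly_Mapping.single m b) -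
    Dt (Poly_Mapping.single m b) * Dh (Poly_Mapping.single n a)"
    unfolding lb_ext ext2_props(3)[of H, OF H1 H2]
    by (simp only: sing e H_def single_diff smm add_diff_eq)
qed (simp_all only: lb_ext ext2_props(1,2)[of H, OF H1 H2], (intro af)+)


lemma lookup_S: "Poly_Mapping.lookup (S c x) k = smul c (Poly_Mapping.lookup x k)"
  unfolding S_def laurent_smul_def by (simp add: lookup_map0)

lemma comm_S: "comm_algebra_over S"
  unfolding comm_algebra_over_def
  by (intro conjI allI poly_mapping_eqI)
     (simp_all add: lookup_S lookup_add sadd sadd2 smult s1 S_mult)

lemma main: "poisson_algebra (laurent_smul smul) (laurent_bracket smul br D)"
proof -
  have lb: "laurent_bracket smul br D = (\<lambda>x y. B0 x y + Dt x * Dh y - Dt y * Dh x)"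
    by (intro ext lb_eq)
  have ls: "laurent_smul smul = S" by (intro ext) (simp add: S_def)
  note ap = abstract_poisson[of B0 Dt Dh, OF addfD[OF addf_B0_1] addfD[OF addf_B0_2] B0_alt B0_jac B0_leib
      addfD[OF addf_Dt] Dt_mult Dt_B0 addfD[OF addf_Dh] Dh_mult Dh_B0 Dt_Dh]
  have as1: "\<And>c x y. B0 (S c x) y + Dt (S c x) * Dh y - Dt y * Dh (S c x) = S c (B0 x y + Dt x * Dh y - Dt y * Dh x)"
    and as2: "\<And>c x y. B0 x (S c y) + Dt x * Dh (S c y) - Dt (S c y) * Dh x = S c (B0 x y + Dt x * Dh y - Dt y * Dh x)"
    using abstract_smul[of "S c" B0 Dt Dh for c, OF addfD[OF addf_S] S_B0_1 S_B0_2 S_mult Dt_S Dh_S] by simp_all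
  show ?thesis
    unfolding poisson_algebra_def poisson_bracket_def k_bilinear_def ls lb
    using ap as1 as2 comm_S by simp
qed

end

theorem mainTheorem4:
  fixes smul :: "'k::field_char_0 \<Rightarrow> 'v::comm_ring \<Rightarrow> 'v"
    and br :: "'v \<Rightarrow> 'v \<Rightarrow> 'v"
    and D :: "'v \<Rightarrow> 'v"
  assumes "poisson_algebra smul br"
    and "poisson_derivation smul br D"
  shows "poisson_algebra (laurent_smul smul) (laurent_bracket smul br D)"
proof -
  interpret pctx smul br D using assms by unfold_locales
  show ?thesis by (rule main)
qed

end
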